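(* Let $d\ge 1$ and let $H=(V,E)$ be a $d$-regular graph, let $E'\subseteq E$, and let $v(e)\in\mathbb Z_2^d$ be assigned to each $e\in E'$. Suppose that for every vertex $u$, the vectors $v(e)$ over all edges $e\in E'$ incident with $u$ are linearly independent. Then one can assign a vector $v(e)\in\mathbb Z_2^d$ to every edge $e\in E\setminus E'$ so that for every vertex $u$, the $d$ vectors assigned to the $d$ edges incident with $u$ form a basis of $\mathbb Z_2^d$.
   Context: All graphs are finite and simple. *)

theory Defs
  imports "HOL-Analysis.Analysis" "HOL-Library.Z2"
begin

definition simple_graph :: "'a set \<Rightarrow> 'a set set \<Rightarrow> bool" where
  "simple_graph V E \<longleftrightarrow> finite V \<and> (\<forall>e\<in>E. e \<subseteq> V \<and> card e = 2)"

definition incident_edges :: "'a set set \<Rightarrow> 'a \<Rightarrow> 'a set set" where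
  "incident_edges E u = {e \<in> E. u \<in> e}"

definition regular_graph :: "nat \<Rightarrow> 'a set \<Rightarrow> 'a set set \<Rightarrow> bool" where
  "regular_graph d V E \<longleftrightarrow> simple_graph V E \<and> (\<forall>u\<in>V. card (incident_edges E u) = d)"

text \<open>Linear independence of an indexed family (f e)_(e in S) of vectors over Z_2
  (a family with repeated vectors is dependent).\<close>
definition indep_family :: "'b set \<Rightarrow> ('b \<Rightarrow> bit ^ 'n) \<Rightarrow> bool" where
  "indep_family S f \<longleftrightarrow> inj_on f S \<and> vec.independent (f ` S)"

definition basis_family :: "'b set \<Rightarrow> ('b \<Rightarrow> bit ^ 'n) \<Rightarrow> bool" where
  "basis_family S f \<longleftrightarrow> indep_family S f \<and> vec.span (f ` S) = UNIV"

end

theory Submission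
  imports Defs
begin

lemma span_full_iff:
  fixes w :: "'b \<Rightarrow> bit ^ 'n"
  assumes "indep_family S w" "finite S"
  shows "vec.span (w ` S) = UNIV \<longleftrightarrow> card S = CARD('n)"
proof -
  have i: "vec.independent (w ` S)" "inj_on w S" using assms(1) unfolding indep_family_def by auto
  have fin: "finite (w ` S)" using assms(2) by simp
  have c: "card (w ` S) = card S" using card_image[OF i(2)] .
  show ?thesis
  proof
    assume "vec.span (w ` S) = UNIV"
    then have "vec.dim (UNIV :: (bit^'n) set) = card (w ` S)"
      using vec.dim_span_eq_card_independent[OF i(1)] by simp
    then show "card S = CARD('n)" using vec_dim_card c by metis
  next
    assume "card S = CARD('n)"
    then have "card (w ` S) = vec.dim (UNIV :: (bit^'n) set)" using vec_dim_card c by metis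
    then have "UNIV \<subseteq> vec.span (w ` S)"
      using vec.card_eq_dim[of "w ` S" UNIV] fin i(1) by blast
    then show "vec.span (w ` S) = UNIV" by blast
  qed
qed

lemma union_two_proper:
  fixes A B :: "(bit ^ 'n) set"
  assumes "vec.subspace A" "vec.subspace B" "A \<noteq> UNIV" "B \<noteq> UNIV"
  shows "\<exists>z. z \<notin> A \<and> z \<notin> B"
proof (cases "A \<subseteq> B")
  case True then show ?thesis using assms(4) by blast
next
  case False
  then obtain a where a: "a \<in> A" "a \<notin> B" by blast
  obtain b where b: "b \<notin> A" using assms(3) by blast
  show ?thesis
  proof (cases "b \<in> B")
    case False then show ?thesis using b by blast
  next
    case True
    have "a + b \<notin> A"
    proof
      assume "a + b \<in> A"
      then have "(a + b) - a \<in> A" using a vec.subspace_diff[OF assms(1)] by blast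
      then show False using b by simp
    qed
    moreover have "a + b \<notin> B"
    proof
      assume "a + b \<in> B"
      then have "(a + b) - b \<in> B" using True vec.subspace_diff[OF assms(2)] by blast
      then show False using a by simp
    qed
    ultimately show ?thesis by blast
  qed
qed

lemma indep_insert:
  fixes w :: "'b \<Rightarrow> bit ^ 'n"
  assumes "indep_family S w" "e \<notin> S" "z \<notin> vec.span (w ` S)"
  shows "indep_family (insert e S) (w(e := z))"
proof -
  have eq: "(w(e := z)) ` S = w ` S" using assms(2) by (auto intro: image_cong)
  have i: "vec.independent (w ` S)" "inj_on w S" using assms(1) unfolding indep_family_def by auto
  have "z \<notin> w ` S" using assms(3) vec.span_base by blast
  then have "inj_on (w(e := z)) (insert e S)"
    using i(2) assms(2) by (auto simp: inj_on_def)
  moreover have "vec.independent (insert z (w ` S))"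
    using vec.independent_insertI[OF assms(3) i(1)] .
  ultimately show ?thesis unfolding indep_family_def image_insert fun_upd_same eq by simp
qed

theorem lemma2p2:
  fixes V :: "'a set" and E E' :: "'a set set" and v :: "'a set \<Rightarrow> bit ^ 'n"
  assumes "regular_graph CARD('n) V E"
    and "E' \<subseteq> E"
    and "\<forall>u\<in>V. indep_family (incident_edges E' u) v"
  shows "\<exists>w :: 'a set \<Rightarrow> bit ^ 'n. (\<forall>e\<in>E'. w e = v e) \<and>
           (\<forall>u\<in>V. basis_family (incident_edges E u) w)"
proof -
  have fV: "finite V" and Ed: "\<forall>e\<in>E. e \<subseteq> V \<and> card e = 2"
    and deg: "\<forall>u\<in>V. card (incident_edges E u) = CARD('n)"
    using assms(1) unfolding regular_graph_def simple_graph_def by auto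
  have fE: "finite E"
  proof -
    have "E \<subseteq> Pow V" using Ed by auto
    then show ?thesis using fV by (meson finite_Pow_iff rev_finite_subset)
  qed
  have finc: "finite (incident_edges F u)" if "F \<subseteq> E" for F u
    by (rule rev_finite_subset[OF fE]) (use that in \<open>auto simp: incident_edges_def\<close>)
  have main: "A \<subseteq> E - E' \<Longrightarrow> \<exists>w :: 'a set \<Rightarrow> bit ^ 'n. (\<forall>e\<in>E'. w e = v e) \<and>
           (\<forall>u\<in>V. indep_family (incident_edges (E' \<union> A) u) w)" if "finite A" for A
    using that
  proof (induction A rule: finite_induct)
    case empty then show ?case using assms(3) by auto
  next
    case (insert e A)
    then obtain w where w1: "\<forall>e\<in>E'. w e = v e"
      and w2: "\<forall>u\<in>V. indep_family (incident_edges (E' \<union> A) u) w" by auto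
    have eE: "e \<in> E" and eE': "e \<notin> E'" using insert.prems by auto
    have eF: "e \<notin> E' \<union> A" using eE' insert.hyps by auto
    have FE: "E' \<union> A \<subseteq> E" using insert.prems assms(2) by auto
    have proper: "vec.span (w ` incident_edges (E' \<union> A) x) \<noteq> UNIV" if "x \<in> e" for x
    proof -
      have xV: "x \<in> V" using Ed eE that by auto
      have sub: "incident_edges (E' \<union> A) x \<subset> incident_edges E x"
        using FE eE eF that unfolding incident_edges_def by auto
      have "card (incident_edges (E' \<union> A) x) < CARD('n)"
        using psubset_card_mono[OF finc[OF order.refl] sub] deg xV by simp
      then show ?thesis using span_full_iff[OF w2[rule_format, OF xV] finc[OF FE]] by simp
    qed
    obtain x y where exy: "e = {x, y}"
    proof -
      have "card e = 2" using Ed eE by auto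
      then show ?thesis using that by (auto simp: card_2_iff)
    qed
    have px: "vec.span (w ` incident_edges (E' \<union> A) x) \<noteq> UNIV" using proper exy by simp
    have py: "vec.span (w ` incident_edges (E' \<union> A) y) \<noteq> UNIV" using proper exy by simp
    obtain z where z: "z \<notin> vec.span (w ` incident_edges (E' \<union> A) x)"
        "z \<notin> vec.span (w ` incident_edges (E' \<union> A) y)"
      using union_two_proper[OF vec.subspace_span vec.subspace_span px py] by blast
    define w' where "w' = w(e := z)"
    have "\<forall>e\<in>E'. w' e = v e" using w1 eE' unfolding w'_def by auto
    moreover have "indep_family (incident_edges (E' \<union> insert e A) u) w'" if uV: "u \<in> V" for u
    proof (cases "u \<in> e")
      case True
      have eq: "incident_edges (E' \<union> insert e A) u = insert e (incident_edges (E' \<union> A) u)"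
        using True unfolding incident_edges_def by auto
      have "e \<notin> incident_edges (E' \<union> A) u" using eF unfolding incident_edges_def by auto
      moreover have "z \<notin> vec.span (w ` incident_edges (E' \<union> A) u)"
        using True exy z by auto
      ultimately show ?thesis unfolding eq w'_def by (rule indep_insert[OF w2[rule_format, OF uV]])
    next
      case False
      have eq: "incident_edges (E' \<union> insert e A) u = incident_edges (E' \<union> A) u"
        using False unfolding incident_edges_def by auto
      have e2: "w' ` incident_edges (E' \<union> A) u = w ` incident_edges (E' \<union> A) u"
        using False unfolding w'_def incident_edges_def by (auto intro: image_cong)
      have "inj_on w' (incident_edges (E' \<union> A) u) = inj_on w (incident_edges (E' \<union> A) u)"
        using False unfolding w'_def incident_edges_def by (intro inj_on_cong) auto
      then show ?thesis using w2 uV unfolding eq indep_family_def e2 by simp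
    qed
    ultimately show ?case by blast
  qed
  obtain w where w1: "\<forall>e\<in>E'. w e = v e"
      and w2: "\<forall>u\<in>V. indep_family (incident_edges (E' \<union> (E - E')) u) w"
    using main[of "E - E'"] fE by blast
  have EE: "E' \<union> (E - E') = E" using assms(2) by auto
  have "basis_family (incident_edges E u) w" if "u \<in> V" for u
    using w2 that span_full_iff[of "incident_edges E u" w] finc[OF order.refl] deg
    unfolding basis_family_def EE by auto
  then show ?thesis using w1 by blast
qed

end
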